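(* In any execution of $\mathtt{search}(\mathcal{G},T)$ (defined in the context), let $t$ be a tangle returned by extract-tangles$(Z,\sigma)$ in an iteration whose region $Z$ has priority $p$, $\alpha\equiv p\pmod 2$, and suppose $Z$ is the highest region of player $\alpha$, i.e. no region recorded in $r$ at that moment has a priority of parity $\alpha$. Then $E_T(t)=\emptyset$ (computed in the full game $\mathcal{G}$).
   Context: Parity games: $\mathcal{G}=(V_0,V_1,E,\mathrm{pr})$, $V=V_0\cup V_1$ finite, partitioned into vertices of Even ($0$) and Odd ($1$); $E\subseteq V\times V$ with every vertex having a successor; $\mathrm{pr}:V\to\{0,\dots,d\}$. $E(u)=\{v:(u,v)\in E\}$, $\mathrm{pr}(U)=\max_{u\in U}\mathrm{pr}(u)$, $\mathrm{pr}^{-1}(p)$ the set of vertices of priority $p$, $\overline{\alpha}=1-\alpha$. A cycle is won by $\alpha$ if its highest priority has parity $\alpha$. A strategy of $\alpha$ is a partial function $\sigma$ on $V_\alpha$ with $\sigma(v)\in E(v)$. For $U\subseteq V$, $\mathcal{G}\cap U$ is the subgame with vertices $V\cap U$ and edges $E\cap(U\times U)$, and $\mathcal{G}\setminus U=\mathcal{G}\cap(V\setminus U)$. A $p$-tangle is a nonempty $U\subseteq V$ with $p=\mathrm{pr}(U)$ such that for $\alpha\equiv p\pmod 2$ there is a strategy $\sigma:U\cap V_\alpha\to U$ (witness strategy $\sigma_T(U)$) with $(U,E\cap(\sigma\cup((U\cap V_{\overline{\alpha}})\times U)))$ strongly connected and all its cycles won by $\alpha$ ("won by $\alpha$"). For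 a tangle $t$ won by $\alpha$ in a game with edge set $E$, $E_T(t)=\{v\notin t:\exists u\in t\cap V_{\overline{\alpha}},(u,v)\in E\}$. $T_\alpha$ denotes the tangles of $T$ won by $\alpha$; for a subgame $\mathcal{G}'$, $T\cap\mathcal{G}'$ denotes the tangles of $T$ contained in its vertex set. Tangle attractor: for a game $\mathcal{G}$ with vertices $V$, tangles $T$, player $\alpha$ and $A\subseteq V$, $\mathit{TAttr}^{\mathcal{G},T}_\alpha(A)$ is the least $Z\supseteq A$ containing every $v\in V_\alpha$ with $E(v)\cap Z\neq\emptyset$, every $v\in V_{\overline{\alpha}}$ with $E(v)\subseteq Z$, and every vertex of every $t\in T_\alpha$ with $\emptyset\neq E_T(t)\subseteq Z$ ($E_T$ computed in $\mathcal{G}$). It is computed iteratively together with a strategy $\sigma$ of $\alpha$ (initially empty): when an $\alpha$-vertex is added individually, $\sigma$ maps it to a successor already in $Z$; each $\alpha$-vertex of $A$ gets as $\sigma$-value a successor in $Z$ once one exists; when the vertices of a tangle $t$ are added, $\sigma(u):=\sigma_T(t)(u)$ for every $\alpha$-vertex $u\in t$ not yet in $\mathrm{dom}(\sigma)$. extract-tangles$(Z,\sigma)$, for a subgame $\mathcal{G}'=(V',E')$ with top priority $p$, $\alpha\equiv p$, region $Z\subseteq V'$ and strategy $\sigma$: let $Y_Z$ be the greatest $X\subseteq Z$ such that every $v\in X\cap V_{\overline{\alpha}}$ has $E'(v)\subseteq X$ and every $v\in X\cap V_\alpha$ has $\sigma(v)\in X$; let $H$ be the graph on $Y_Z$ with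 edges $(v,\sigma(v))$ for $v\in Y_Z\cap V_\alpha$ and $(v,w)\in E'$ for $v\in Y_Z\cap V_{\overline{\alpha}}$; return all bottom strongly connected components of $H$ that contain at least one edge of $H$, each with witness strategy $\sigma$ restricted to it. $\mathtt{search}(\mathcal{G},T)$ (with $T$ a set of tangles of $\mathcal{G}$): repeat forever: set $r:=\emptyset$ (a partial function $V\to\mathbb{N}$, the region function) and $Y:=\emptyset$; while $V\setminus\mathrm{dom}(r)\neq\emptyset$: let $\mathcal{G}':=\mathcal{G}\setminus\mathrm{dom}(r)$ with vertex set $V'$, $T':=T\cap\mathcal{G}'$, $p:=\mathrm{pr}(\mathcal{G}')$, $\alpha:=p\bmod 2$; compute $(Z,\sigma):=\mathit{TAttr}^{\mathcal{G}',T'}_\alpha(\mathrm{pr}^{-1}(p)\cap V')$ (the region of priority $p$); let $A:=$ extract-tangles$(Z,\sigma)$; if some $t\in A$ has $E_T(t)=\emptyset$ with $E_T$ computed in the full game $\mathcal{G}$, return $(T\cup Y,t)$; otherwise set $r(v):=p$ for all $v\in Z$ and $Y:=Y\cup A$. After the while-loop, set $T:=T\cup Y$. *)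

theory Defs
  imports Main
begin

definition parity_game :: "'v set \<Rightarrow> 'v set \<Rightarrow> ('v \<times> 'v) set \<Rightarrow> ('v \<Rightarrow> nat) \<Rightarrow> bool" where
  "parity_game V0 V1 E pr \<longleftrightarrow>
     finite (V0 \<union> V1) \<and> V0 \<inter> V1 = {} \<and> E \<subseteq> (V0 \<union> V1) \<times> (V0 \<union> V1) \<and>
     (\<forall>v\<in>V0 \<union> V1. \<exists>w. (v, w) \<in> E)"

text \<open>Vertices of player alpha (0 = Even, 1 = Odd).\<close>
definition owned :: "'v set \<Rightarrow> 'v set \<Rightarrow> nat \<Rightarrow> 'v set" where
  "owned V0 V1 \<alpha> = (if \<alpha> = 0 then V0 else V1)"

definition prio :: "('v \<Rightarrow> nat) \<Rightarrow> 'v set \<Rightarrow> nat" where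
  "prio pr U = Max (pr ` U)"

text \<open>A tangle is a vertex set together with its witness strategy (a partial map).\<close>
type_synonym 'v tangle = "'v set \<times> ('v \<rightharpoonup> 'v)"

definition tangle_graph :: "'v set \<Rightarrow> 'v set \<Rightarrow> ('v \<times> 'v) set \<Rightarrow> ('v \<Rightarrow> nat) \<Rightarrow> 'v set \<Rightarrow> ('v \<rightharpoonup> 'v) \<Rightarrow> ('v \<times> 'v) set" where
  "tangle_graph V0 V1 E pr U \<tau> =
     (let \<alpha> = prio pr U mod 2 in
      {(u, w). u \<in> U \<inter> owned V0 V1 \<alpha> \<and> \<tau> u = Some w \<and> (u, w) \<in> E} \<union>
      {(u, w). (u, w) \<in> E \<and> u \<in> U \<inter> owned V0 V1 (1 - \<alpha>) \<and> w \<in> U})"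

definition is_tangle :: "'v set \<Rightarrow> 'v set \<Rightarrow> ('v \<times> 'v) set \<Rightarrow> ('v \<Rightarrow> nat) \<Rightarrow> 'v tangle \<Rightarrow> bool" where
  "is_tangle V0 V1 E pr t \<longleftrightarrow>
     (case t of (U, \<tau>) \<Rightarrow>
        U \<noteq> {} \<and> U \<subseteq> V0 \<union> V1 \<and>
        (let \<alpha> = prio pr U mod 2; H = tangle_graph V0 V1 E pr U \<tau> in
           dom \<tau> = U \<inter> owned V0 V1 \<alpha> \<and>
           (\<forall>u w. \<tau> u = Some w \<longrightarrow> (u, w) \<in> E \<and> w \<in> U) \<and>
           (\<forall>u\<in>U. \<forall>w\<in>U. (u, w) \<in> H\<^sup>*) \<and>
           (\<forall>xs. xs \<noteq> [] \<and> (\<forall>i<length xs. (xs ! i, xs ! ((i + 1) mod length xs)) \<in> H)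
                 \<longrightarrow> prio pr (set xs) mod 2 = \<alpha>)))"

definition escapes :: "'v set \<Rightarrow> 'v set \<Rightarrow> ('v \<times> 'v) set \<Rightarrow> nat \<Rightarrow> 'v set \<Rightarrow> 'v set" where
  "escapes V0 V1 E \<alpha> U = {v. v \<notin> U \<and> (\<exists>u\<in>U \<inter> owned V0 V1 (1 - \<alpha>). (u, v) \<in> E)}"

text \<open>Tangle attractor, as the (nondeterministic) iterative computation.  While some alpha-vertex of A still lacks a
  strategy value but has a successor in Z, it gets one first ("once one exists").\<close>

definition attr_pending :: "'v set \<Rightarrow> 'v set \<Rightarrow> ('v \<times> 'v) set \<Rightarrow> nat \<Rightarrow> 'v set \<Rightarrow> 'v set \<Rightarrow> ('v \<rightharpoonup> 'v) \<Rightarrow> bool" where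
  "attr_pending V0 V1 E \<alpha> A Z \<sigma> \<longleftrightarrow>
     (\<exists>a\<in>A \<inter> owned V0 V1 \<alpha>. a \<notin> dom \<sigma> \<and> (\<exists>w\<in>Z. (a, w) \<in> E))"

inductive tattr_run :: "'v set \<Rightarrow> 'v set \<Rightarrow> 'v set \<Rightarrow> ('v \<times> 'v) set \<Rightarrow> ('v \<Rightarrow> nat) \<Rightarrow> 'v tangle set
    \<Rightarrow> nat \<Rightarrow> 'v set \<Rightarrow> 'v set \<Rightarrow> ('v \<rightharpoonup> 'v) \<Rightarrow> bool"
  for V0 V1 V E pr T \<alpha> A where
  start: "tattr_run V0 V1 V E pr T \<alpha> A A Map.empty"
| assign: "\<lbrakk>tattr_run V0 V1 V E pr T \<alpha> A Z \<sigma>; a \<in> A \<inter> owned V0 V1 \<alpha>; a \<notin> dom \<sigma>;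
            (a, w) \<in> E; w \<in> Z\<rbrakk>
           \<Longrightarrow> tattr_run V0 V1 V E pr T \<alpha> A Z (\<sigma>(a \<mapsto> w))"
| add_own: "\<lbrakk>tattr_run V0 V1 V E pr T \<alpha> A Z \<sigma>; \<not> attr_pending V0 V1 E \<alpha> A Z \<sigma>;
             v \<in> V \<inter> owned V0 V1 \<alpha>; v \<notin> Z; (v, w) \<in> E; w \<in> Z\<rbrakk>
           \<Longrightarrow> tattr_run V0 V1 V E pr T \<alpha> A (insert v Z) (\<sigma>(v \<mapsto> w))"
| add_opp: "\<lbrakk>tattr_run V0 V1 V E pr T \<alpha> A Z \<sigma>; \<not> attr_pending V0 V1 E \<alpha> A Z \<sigma>;
             v \<in> V \<inter> owned V0 V1 (1 - \<alpha>); v \<notin> Z; \<forall>w. (v, w) \<in> E \<longrightarrow> w \<in> Z\<rbrakk>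
           \<Longrightarrow> tattr_run V0 V1 V E pr T \<alpha> A (insert v Z) \<sigma>"
| add_tangle: "\<lbrakk>tattr_run V0 V1 V E pr T \<alpha> A Z \<sigma>; \<not> attr_pending V0 V1 E \<alpha> A Z \<sigma>;
                (U, \<tau>) \<in> T; prio pr U mod 2 = \<alpha>; \<not> U \<subseteq> Z;
                escapes V0 V1 E \<alpha> U \<noteq> {}; escapes V0 V1 E \<alpha> U \<subseteq> Z\<rbrakk>
           \<Longrightarrow> tattr_run V0 V1 V E pr T \<alpha> A (Z \<union> U)
                 (\<lambda>u. if u \<in> U \<inter> owned V0 V1 \<alpha> \<and> u \<notin> dom \<sigma> then \<tau> u else \<sigma> u)"

definition tattr_result :: "'v set \<Rightarrow> 'v set \<Rightarrow> 'v set \<Rightarrow> ('v \<times> 'v) set \<Rightarrow> ('v \<Rightarrow> nat) \<Rightarrow> 'v tangle set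
    \<Rightarrow> nat \<Rightarrow> 'v set \<Rightarrow> 'v set \<Rightarrow> ('v \<rightharpoonup> 'v) \<Rightarrow> bool" where
  "tattr_result V0 V1 V E pr T \<alpha> A Z \<sigma> \<longleftrightarrow>
     tattr_run V0 V1 V E pr T \<alpha> A Z \<sigma> \<and>
     \<not> attr_pending V0 V1 E \<alpha> A Z \<sigma> \<and>
     (\<forall>v\<in>(V \<inter> owned V0 V1 \<alpha>) - Z. \<forall>w. (v, w) \<in> E \<longrightarrow> w \<notin> Z) \<and>
     (\<forall>v\<in>(V \<inter> owned V0 V1 (1 - \<alpha>)) - Z. \<exists>w. (v, w) \<in> E \<and> w \<notin> Z) \<and>
     (\<forall>(U, \<tau>)\<in>T. prio pr U mod 2 = \<alpha> \<and> escapes V0 V1 E \<alpha> U \<noteq> {} \<and>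
                  escapes V0 V1 E \<alpha> U \<subseteq> Z \<longrightarrow> U \<subseteq> Z)"

definition ext_closed :: "'v set \<Rightarrow> 'v set \<Rightarrow> ('v \<times> 'v) set \<Rightarrow> nat \<Rightarrow> ('v \<rightharpoonup> 'v) \<Rightarrow> 'v set \<Rightarrow> bool" where
  "ext_closed V0 V1 E \<alpha> \<sigma> X \<longleftrightarrow>
     (\<forall>v\<in>X \<inter> owned V0 V1 (1 - \<alpha>). \<forall>w. (v, w) \<in> E \<longrightarrow> w \<in> X) \<and>
     (\<forall>v\<in>X \<inter> owned V0 V1 \<alpha>. \<exists>w. \<sigma> v = Some w \<and> w \<in> X)"

definition ext_core :: "'v set \<Rightarrow> 'v set \<Rightarrow> ('v \<times> 'v) set \<Rightarrow> nat \<Rightarrow> 'v set \<Rightarrow> ('v \<rightharpoonup> 'v) \<Rightarrow> 'v set" where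
  "ext_core V0 V1 E \<alpha> Z \<sigma> = \<Union>{X. X \<subseteq> Z \<and> ext_closed V0 V1 E \<alpha> \<sigma> X}"

definition ext_graph :: "'v set \<Rightarrow> 'v set \<Rightarrow> ('v \<times> 'v) set \<Rightarrow> nat \<Rightarrow> 'v set \<Rightarrow> ('v \<rightharpoonup> 'v) \<Rightarrow> ('v \<times> 'v) set" where
  "ext_graph V0 V1 E \<alpha> Y \<sigma> =
     {(v, w). v \<in> Y \<inter> owned V0 V1 \<alpha> \<and> \<sigma> v = Some w} \<union>
     {(v, w). (v, w) \<in> E \<and> v \<in> Y \<inter> owned V0 V1 (1 - \<alpha>)}"

definition extract_tangles :: "'v set \<Rightarrow> 'v set \<Rightarrow> ('v \<times> 'v) set \<Rightarrow> nat \<Rightarrow> 'v set \<Rightarrow> ('v \<rightharpoonup> 'v) \<Rightarrow> 'v tangle set" where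
  "extract_tangles V0 V1 E \<alpha> Z \<sigma> =
     (let Y = ext_core V0 V1 E \<alpha> Z \<sigma>; H = ext_graph V0 V1 E \<alpha> Y \<sigma> in
      {(C, \<sigma> |` C) | C. \<exists>u\<in>Y. C = {w. (u, w) \<in> H\<^sup>* \<and> (w, u) \<in> H\<^sup>*} \<and>
                           (\<forall>v w. (v, w) \<in> H \<and> v \<in> C \<longrightarrow> w \<in> C) \<and>
                           (\<exists>v w. (v, w) \<in> H \<and> v \<in> C \<and> w \<in> C)})"

text \<open>Reachable states (T, r, Y) of search(G, T0) at the start of an inner-loop iteration
  (or right after the inner loop finished).\<close>
inductive search_reach :: "'v set \<Rightarrow> 'v set \<Rightarrow> ('v \<times> 'v) set \<Rightarrow> ('v \<Rightarrow> nat) \<Rightarrow> 'v tangle set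
    \<Rightarrow> 'v tangle set \<Rightarrow> ('v \<rightharpoonup> nat) \<Rightarrow> 'v tangle set \<Rightarrow> bool"
  for V0 V1 E pr T0 where
  init: "search_reach V0 V1 E pr T0 T0 Map.empty {}"
| iter: "\<lbrakk>search_reach V0 V1 E pr T0 T r Y;
          V' = (V0 \<union> V1) - dom r; V' \<noteq> {};
          p = prio pr V'; \<alpha> = p mod 2;
          tattr_result V0 V1 V' (E \<inter> (V' \<times> V')) pr {t \<in> T. fst t \<subseteq> V'} \<alpha> {v \<in> V'. pr v = p} Z \<sigma>;
          A = extract_tangles V0 V1 (E \<inter> (V' \<times> V')) \<alpha> Z \<sigma>;
          \<forall>t\<in>A. escapes V0 V1 E \<alpha> (fst t) \<noteq> {}\<rbrakk>
         \<Longrightarrow> search_reach V0 V1 E pr T0 T (r ++ (\<lambda>v. if v \<in> Z then Some p else None)) (Y \<union> A)"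
| restart: "\<lbrakk>search_reach V0 V1 E pr T0 T r Y; (V0 \<union> V1) - dom r = {}\<rbrakk>
         \<Longrightarrow> search_reach V0 V1 E pr T0 (T \<union> Y) Map.empty {}"

end

theory Submission
  imports Defs
begin

lemma tattr_run_sub:
  assumes "tattr_run V0 V1 V E pr T \<alpha> A Z \<sigma>" "A \<subseteq> V" "\<forall>t\<in>T. fst t \<subseteq> V"
  shows "Z \<subseteq> V"
  using assms by (induction rule: tattr_run.induct) force+

definition inv8 :: "'v set \<Rightarrow> 'v set \<Rightarrow> ('v \<times> 'v) set \<Rightarrow> ('v \<rightharpoonup> nat) \<Rightarrow> bool" where
  "inv8 V0 V1 E r \<longleftrightarrow> (\<forall>v q u. r v = Some q \<longrightarrow> u \<in> V0 \<union> V1 \<longrightarrow> u \<notin> dom r \<longrightarrow>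
      u \<in> owned V0 V1 (q mod 2) \<longrightarrow> (u, v) \<in> E \<longrightarrow> False)"

lemma search_inv:
  assumes "search_reach V0 V1 E pr T0 T r Y"
  shows "inv8 V0 V1 E r"
  using assms
proof (induction rule: search_reach.induct)
  case init
  then show ?case by (simp add: inv8_def)
next
  case (iter T r Y V' p \<alpha> Z \<sigma> A)
  have ZV: "Z \<subseteq> V'"
    using tattr_run_sub[of V0 V1 V' "E \<inter> (V' \<times> V')" pr "{t \<in> T. fst t \<subseteq> V'}" \<alpha> "{v \<in> V'. pr v = p}" Z \<sigma>]
      iter.hyps(6) unfolding tattr_result_def by blast
  have R: "\<forall>v\<in>(V' \<inter> owned V0 V1 \<alpha>) - Z. \<forall>w. (v, w) \<in> E \<inter> (V' \<times> V') \<longrightarrow> w \<notin> Z"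
    using iter.hyps(6) unfolding tattr_result_def by blast
  show ?case
    unfolding inv8_def
  proof (intro allI impI)
    fix v q u
    assume a: "(r ++ (\<lambda>v. if v \<in> Z then Some p else None)) v = Some q"
      "u \<in> V0 \<union> V1" "u \<notin> dom (r ++ (\<lambda>v. if v \<in> Z then Some p else None))"
      "u \<in> owned V0 V1 (q mod 2)" "(u, v) \<in> E"
    show False
    proof (cases "v \<in> Z")
      case True
      then have "q = p" using a(1) by (simp add: map_add_def)
      moreover have "u \<in> V'" "u \<notin> Z" using a(2,3) iter.hyps(2) by (auto simp: dom_map_add split: if_splits)
      ultimately show False using R True ZV a(4,5) iter.hyps(5) by blast
    next
      case False
      then have "r v = Some q" using a(1) by (simp add: map_add_def)
      moreover have "u \<notin> dom r" using a(3) by auto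
      ultimately show False using iter.IH a(2,4,5) unfolding inv8_def by blast
    qed
  qed
next
  case (restart T r Y)
  then show ?case by (simp add: inv8_def)
qed

theorem lemma8:
  fixes V0 V1 :: "'v set" and E :: "('v \<times> 'v) set" and pr :: "'v \<Rightarrow> nat"
    and T0 T Y :: "'v tangle set" and r :: "'v \<rightharpoonup> nat"
  assumes "parity_game V0 V1 E pr"
    and "\<forall>t\<in>T0. is_tangle V0 V1 E pr t"
    and "search_reach V0 V1 E pr T0 T r Y"
    and "V' = (V0 \<union> V1) - dom r" and "V' \<noteq> {}"
    and "p = prio pr V'" and "\<alpha> = p mod 2"
    and "tattr_result V0 V1 V' (E \<inter> (V' \<times> V')) pr {t \<in> T. fst t \<subseteq> V'} \<alpha> {v \<in> V'. pr v = p} Z \<sigma>"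
    and "t \<in> extract_tangles V0 V1 (E \<inter> (V' \<times> V')) \<alpha> Z \<sigma>"
    and "\<forall>q\<in>ran r. q mod 2 \<noteq> \<alpha>"
  shows "escapes V0 V1 E \<alpha> (fst t) = {}"
proof (rule ccontr)
  assume "escapes V0 V1 E \<alpha> (fst t) \<noteq> {}"
  then obtain x u where x: "x \<notin> fst t" "u \<in> fst t" "u \<in> owned V0 V1 (1 - \<alpha>)" "(u, x) \<in> E"
    unfolding escapes_def by blast
  define E' where "E' = E \<inter> (V' \<times> V')"
  define Yc where "Yc = ext_core V0 V1 E' \<alpha> Z \<sigma>"
  define H where "H = ext_graph V0 V1 E' \<alpha> Yc \<sigma>"
  obtain C where C: "t = (C, \<sigma> |` C)" "\<exists>u\<in>Yc. C = {w. (u, w) \<in> H\<^sup>* \<and> (w, u) \<in> H\<^sup>*}"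
    "\<forall>v w. (v, w) \<in> H \<and> v \<in> C \<longrightarrow> w \<in> C"
    using assms(9) unfolding extract_tangles_def Let_def E'_def[symmetric] Yc_def[symmetric] H_def[symmetric]
    by blast
  have ZV: "Z \<subseteq> V'"
    using tattr_run_sub[of V0 V1 V' "E \<inter> (V' \<times> V')" pr "{t \<in> T. fst t \<subseteq> V'}" \<alpha> "{v \<in> V'. pr v = p}" Z \<sigma>]
      assms(8) unfolding tattr_result_def by blast
  have YZ: "Yc \<subseteq> Z" unfolding Yc_def ext_core_def by blast
  have Hclosed: "\<And>a b. (a, b) \<in> H \<Longrightarrow> a \<in> Yc \<Longrightarrow> b \<in> Yc"
  proof -
    fix a b assume h: "(a, b) \<in> H" "a \<in> Yc"
    then obtain X where X: "X \<subseteq> Z" "ext_closed V0 V1 E' \<alpha> \<sigma> X" "a \<in> X"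
      unfolding Yc_def ext_core_def by blast
    have cl1: "\<forall>v\<in>X \<inter> owned V0 V1 (1 - \<alpha>). \<forall>w. (v, w) \<in> E' \<longrightarrow> w \<in> X"
      and cl2: "\<forall>v\<in>X \<inter> owned V0 V1 \<alpha>. \<exists>w. \<sigma> v = Some w \<and> w \<in> X"
      using X(2) unfolding ext_closed_def by blast+
    have "b \<in> X"
    proof (cases "a \<in> owned V0 V1 \<alpha> \<and> \<sigma> a = Some b")
      case True
      then obtain w where "\<sigma> a = Some w" "w \<in> X" using cl2 X(3) by blast
      then show ?thesis using True by simp
    next
      case False
      then have "(a, b) \<in> E'" "a \<in> owned V0 V1 (1 - \<alpha>)" using h(1) unfolding H_def ext_graph_def by auto
      then show ?thesis using cl1 X(3) by blast
    qed
    then show "b \<in> Yc" using X unfolding Yc_def ext_core_def by blast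
  qed
  have reach: "\<And>a b. (a, b) \<in> H\<^sup>* \<Longrightarrow> a \<in> Yc \<Longrightarrow> b \<in> Yc"
  proof -
    fix a b assume "(a, b) \<in> H\<^sup>*" "a \<in> Yc"
    then show "b \<in> Yc" by (induction rule: rtrancl_induct) (auto intro: Hclosed)
  qed
  have CY: "C \<subseteq> Yc" using C(2) reach by blast
  have uC: "u \<in> C" "x \<notin> C" using x C(1) by auto
  have uV: "u \<in> V'" using uC CY YZ ZV by blast
  have xV: "x \<notin> V'"
  proof
    assume "x \<in> V'"
    then have "(u, x) \<in> H" using uC CY x(3,4) uV unfolding H_def ext_graph_def E'_def by auto
    then show False using C(3) uC by blast
  qed
  have "x \<in> V0 \<union> V1" using assms(1) x(4) unfolding parity_game_def by blast
  then obtain q where q: "r x = Some q" using xV assms(4) by auto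
  have "q mod 2 \<noteq> \<alpha>" using assms(10) q by (auto simp: ran_def)
  then have ow: "owned V0 V1 (q mod 2) = owned V0 V1 (1 - \<alpha>)"
    using assms(7) unfolding owned_def by auto
  have "u \<in> V0 \<union> V1" "u \<notin> dom r" using uV assms(4) by auto
  then show False using search_inv[OF assms(3)] q x(3,4) ow unfolding inv8_def by blast
qed

end
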